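(* Let $m>1$ be odd. There exists an OQS of length $m$ if and only if there exists a normalized cocycle $\psi\in Z^2(\mathbb{Z}_2\times\mathbb{Z}_m,\langle-1\rangle)$ that is quasi-orthogonal and is not a coboundary.
   Context: A quaternary sequence $f:\mathbb{Z}_m\to\{\pm1,\pm\mathrm{i}\}$ of odd length $m$ is an OQS if $|R_f(w)|=1$ for all $1\le w\le m-1$, where $R_f(w)=\sum_{k\in\mathbb{Z}_m}f(k)\overline{f(k+w)}$. For a finite group $G$, a cocycle is a map $\psi:G\times G\to\langle-1\rangle=\{\pm1\}$ with $\psi(g,h)\psi(gh,k)=\psi(g,hk)\psi(h,k)$ for all $g,h,k\in G$; it is normalized if $\psi(1,1)=1$. These form a group $Z^2(G,\langle-1\rangle)$ under pointwise multiplication. For $\phi:G\to\{\pm1\}$, the coboundary $\partial\phi(g,h)=\phi(g)^{-1}\phi(h)^{-1}\phi(gh)$; coboundaries form the subgroup $B^2(G,\langle-1\rangle)$. The cocyclic matrix is $M_\psi=[\psi(g,h)]_{g,h\in G}$. Its row excess $RE(M_\psi)$ is the sum of the absolute values of all row sums of $M_\psi$ except the row indexed by the identity. If $|G|=4t+2$, a normalized cocycle $\psi$ is quasi-orthogonal if either $\psi\notin B^2(G,\langle-1\rangle)$ and $RE(M_\psi)=4t$, or $\psi\in B^2(G,\langle-1\rangle)$ and $RE(M_\psi)=8t+2$. *)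

theory Defs
  imports Complex_Main "HOL-Algebra.Elementary_Groups"
begin

definition autocorr :: "nat \<Rightarrow> (nat \<Rightarrow> complex) \<Rightarrow> nat \<Rightarrow> complex" where
  "autocorr m f w = (\<Sum>k<m. f k * cnj (f ((k + w) mod m)))"

definition OQS :: "nat \<Rightarrow> (nat \<Rightarrow> complex) \<Rightarrow> bool" where
  "OQS m f \<longleftrightarrow> odd m \<and> (\<forall>k<m. f k \<in> {1, -1, \<i>, -\<i>})
     \<and> (\<forall>w\<in>{1..m-1}. cmod (autocorr m f w) = 1)"

text \<open>Cocycles G x G -> <-1> = {1,-1}, values written as integers.\<close>
definition cocycle :: "('a, 'b) monoid_scheme \<Rightarrow> ('a \<Rightarrow> 'a \<Rightarrow> int) \<Rightarrow> bool" where
  "cocycle G \<psi> \<longleftrightarrow>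
     (\<forall>g\<in>carrier G. \<forall>h\<in>carrier G. \<psi> g h \<in> {1, -1}) \<and>
     (\<forall>g\<in>carrier G. \<forall>h\<in>carrier G. \<forall>k\<in>carrier G.
        \<psi> g h * \<psi> (g \<otimes>\<^bsub>G\<^esub> h) k = \<psi> g (h \<otimes>\<^bsub>G\<^esub> k) * \<psi> h k)"

definition normalized_cocycle :: "('a, 'b) monoid_scheme \<Rightarrow> ('a \<Rightarrow> 'a \<Rightarrow> int) \<Rightarrow> bool" where
  "normalized_cocycle G \<psi> \<longleftrightarrow> cocycle G \<psi> \<and> \<psi> \<one>\<^bsub>G\<^esub> \<one>\<^bsub>G\<^esub> = 1"

text \<open>Coboundary of phi : G -> {1,-1}: phi(g)^-1 phi(h)^-1 phi(gh) (inverses are trivial in {1,-1}).\<close>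
definition coboundary :: "('a, 'b) monoid_scheme \<Rightarrow> ('a \<Rightarrow> 'a \<Rightarrow> int) \<Rightarrow> bool" where
  "coboundary G \<psi> \<longleftrightarrow>
     (\<exists>\<phi>. (\<forall>g\<in>carrier G. \<phi> g \<in> {1, -1}) \<and>
          (\<forall>g\<in>carrier G. \<forall>h\<in>carrier G. \<psi> g h = \<phi> g * \<phi> h * \<phi> (g \<otimes>\<^bsub>G\<^esub> h)))"

definition row_excess :: "('a, 'b) monoid_scheme \<Rightarrow> ('a \<Rightarrow> 'a \<Rightarrow> int) \<Rightarrow> int" where
  "row_excess G \<psi> = (\<Sum>g\<in>carrier G - {\<one>\<^bsub>G\<^esub>}. \<bar>\<Sum>h\<in>carrier G. \<psi> g h\<bar>)"

definition quasi_orthogonal :: "('a, 'b) monoid_scheme \<Rightarrow> ('a \<Rightarrow> 'a \<Rightarrow> int) \<Rightarrow> bool" where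
  "quasi_orthogonal G \<psi> \<longleftrightarrow> normalized_cocycle G \<psi> \<and>
     (\<exists>t::nat. card (carrier G) = 4*t + 2 \<and>
        ((\<not> coboundary G \<psi> \<and> row_excess G \<psi> = 4 * int t) \<or>
         (coboundary G \<psi> \<and> row_excess G \<psi> = 8 * int t + 2)))"

end

theory Submission
  imports Defs
begin

definition mulm :: "nat \<Rightarrow> int \<times> int \<Rightarrow> int \<times> int \<Rightarrow> int \<times> int" where
  "mulm m g h = ((fst g + fst h) mod 2, (snd g + snd h) mod int m)"

definition CC :: "nat \<Rightarrow> (int \<times> int) set" where
  "CC m = {0..<2} \<times> {0..<int m}"

definition dphi :: "nat \<Rightarrow> (int \<times> int \<Rightarrow> int) \<Rightarrow> int \<times> int \<Rightarrow> int \<times> int \<Rightarrow> int" where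
  "dphi m \<phi> g h = \<phi> g * \<phi> h * \<phi> (mulm m g h)"

definition beta :: "int \<times> int \<Rightarrow> int \<times> int \<Rightarrow> int" where
  "beta g h = (if fst g = 1 \<and> fst h = 1 then -1 else 1)"

abbreviation GG :: "nat \<Rightarrow> (int \<times> int) monoid" where
  "GG m \<equiv> integer_mod_group 2 \<times>\<times> integer_mod_group m"

lemma carrGG: "m > 0 \<Longrightarrow> carrier (GG m) = CC m"
  by (simp add: CC_def carrier_integer_mod_group)

lemma multGG: "g \<otimes>\<^bsub>GG m\<^esub> h = mulm m g h"
  by (cases g, cases h) (simp add: mulm_def)

lemma oneGG: "\<one>\<^bsub>GG m\<^esub> = (0,0)"
  by simp

lemma mulm_CC: "m > 0 \<Longrightarrow> mulm m g h \<in> CC m"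
  by (auto simp: mulm_def CC_def)

lemma mulm_assoc: "mulm m (mulm m g h) k = mulm m g (mulm m h k)"
  by (simp add: mulm_def mod_add_left_eq mod_add_right_eq add.assoc)

lemma cocycle_iff: "m > 0 \<Longrightarrow> cocycle (GG m) \<psi> \<longleftrightarrow>
   (\<forall>g\<in>CC m. \<forall>h\<in>CC m. \<psi> g h \<in> {1,-1}) \<and>
   (\<forall>g\<in>CC m. \<forall>h\<in>CC m. \<forall>k\<in>CC m. \<psi> g h * \<psi> (mulm m g h) k = \<psi> g (mulm m h k) * \<psi> h k)"
  unfolding cocycle_def carrGG multGG by simp

lemma coboundary_iff: "m > 0 \<Longrightarrow> coboundary (GG m) \<psi> \<longleftrightarrow>
   (\<exists>\<phi>. (\<forall>g\<in>CC m. \<phi> g \<in> {1,-1}) \<and> (\<forall>g\<in>CC m. \<forall>h\<in>CC m. \<psi> g h = dphi m \<phi> g h))"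
  unfolding coboundary_def carrGG multGG dphi_def by simp

lemma row_excess_eq: "m > 0 \<Longrightarrow> row_excess (GG m) \<psi> = (\<Sum>g\<in>CC m - {(0,0)}. \<bar>\<Sum>h\<in>CC m. \<psi> g h\<bar>)"
  unfolding row_excess_def carrGG by simp

lemma card_CC: "card (CC m) = 2 * m"
  by (simp add: CC_def card_cartesian_product)

lemma pm1_sq: "(x::int) \<in> {1,-1} \<Longrightarrow> x * x = 1"
  by auto

lemma pm1_pow_odd: "(x::int) \<in> {1,-1} \<Longrightarrow> odd n \<Longrightarrow> x ^ n = x"
  by (auto simp: power_minus_odd)

lemma prod_pm1: "(\<And>x. x \<in> S \<Longrightarrow> f x \<in> {1,-1::int}) \<Longrightarrow> prod f S \<in> {1,-1}"
proof (induction S rule: infinite_finite_induct)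
  case (insert x F)
  have "f x \<in> {1,-1}" "prod f F \<in> {1,-1}" using insert by auto
  then show ?case using insert(1,2) by auto
qed auto

lemma bij_shift: "m > 0 \<Longrightarrow> bij_betw (\<lambda>y. (y0 + y) mod int m) {0..<int m} {0..<int m}"
  apply (rule bij_betw_byWitness[where f' = "\<lambda>y. (y - y0) mod int m"])
     apply (auto simp: mod_diff_left_eq mod_add_right_eq)
  done

lemma prod_shift: "m > 0 \<Longrightarrow> (\<Prod>y\<in>{0..<int m}. F ((y0 + y) mod int m)) = (\<Prod>y\<in>{0..<int m}. F y)"
  using prod.reindex_bij_betw[OF bij_shift[of m y0], of F] by simp

definition cocid :: "nat \<Rightarrow> (int \<times> int \<Rightarrow> int \<times> int \<Rightarrow> int) \<Rightarrow> bool" where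
  "cocid m \<psi> \<longleftrightarrow> (\<forall>g\<in>CC m. \<forall>h\<in>CC m. \<forall>k\<in>CC m.
      \<psi> g h * \<psi> (mulm m g h) k = \<psi> g (mulm m h k) * \<psi> h k)"

lemma cocid_cong: assumes "m > 0" "\<And>g h. g \<in> CC m \<Longrightarrow> h \<in> CC m \<Longrightarrow> \<psi> g h = \<chi> g h" "cocid m \<psi>"
  shows "cocid m \<chi>"
  using assms mulm_CC unfolding cocid_def by metis

lemma cocid_mult: assumes "cocid m \<psi>" "cocid m \<chi>"
  shows "cocid m (\<lambda>g h. \<psi> g h * \<chi> g h)"
proof -
  { fix g h k assume "g \<in> CC m" "h \<in> CC m" "k \<in> CC m"
    then have "\<psi> g h * \<psi> (mulm m g h) k = \<psi> g (mulm m h k) * \<psi> h k"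
      "\<chi> g h * \<chi> (mulm m g h) k = \<chi> g (mulm m h k) * \<chi> h k"
      using assms unfolding cocid_def by auto
    then have "\<psi> g h * \<chi> g h * (\<psi> (mulm m g h) k * \<chi> (mulm m g h) k) =
          \<psi> g (mulm m h k) * \<chi> g (mulm m h k) * (\<psi> h k * \<chi> h k)"
      by (metis (no_types, lifting) mult.assoc mult.left_commute) }
  then show ?thesis unfolding cocid_def by blast
qed

lemma cocid_dphi: assumes "m > 0" "\<And>g. g \<in> CC m \<Longrightarrow> \<Phi> g \<in> {1,-1}"
  shows "cocid m (dphi m \<Phi>)"
proof -
  { fix g h k assume gh: "g \<in> CC m" "h \<in> CC m" "k \<in> CC m"
    have s1: "\<Phi> (mulm m g h) * \<Phi> (mulm m g h) = 1" "\<Phi> (mulm m h k) * \<Phi> (mulm m h k) = 1"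
      using assms mulm_CC pm1_sq by blast+
    have "dphi m \<Phi> g h * dphi m \<Phi> (mulm m g h) k
        = \<Phi> g * \<Phi> h * \<Phi> k * \<Phi> (mulm m (mulm m g h) k) * (\<Phi> (mulm m g h) * \<Phi> (mulm m g h))"
      unfolding dphi_def by (simp add: algebra_simps)
    also have "\<dots> = \<Phi> g * \<Phi> h * \<Phi> k * \<Phi> (mulm m g (mulm m h k)) * (\<Phi> (mulm m h k) * \<Phi> (mulm m h k))"
      using s1 mulm_assoc by simp
    also have "\<dots> = dphi m \<Phi> g (mulm m h k) * dphi m \<Phi> h k"
      unfolding dphi_def by (simp add: algebra_simps)
    finally have "dphi m \<Phi> g h * dphi m \<Phi> (mulm m g h) k = dphi m \<Phi> g (mulm m h k) * dphi m \<Phi> h k" . }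
  then show ?thesis unfolding cocid_def by blast
qed

lemma cocid_beta: "cocid m beta"
proof -
  { fix g h k assume gh: "g \<in> CC m" "h \<in> CC m" "k \<in> CC m"
    then have "fst g \<in> {0,1}" "fst h \<in> {0,1}" "fst k \<in> {0,1}" by (auto simp: CC_def)
    then have "beta g h * beta (mulm m g h) k = beta g (mulm m h k) * beta h k"
      by (auto simp: beta_def mulm_def) }
  then show ?thesis unfolding cocid_def by blast
qed

lemma mulm_zero_right: "g \<in> CC m \<Longrightarrow> mulm m g (0,0) = g"
  by (cases g) (auto simp: mulm_def CC_def)

lemma mulm_zero_left: "g \<in> CC m \<Longrightarrow> mulm m (0,0) g = g"
  by (cases g) (auto simp: mulm_def CC_def)

lemma cocidD: "cocid m \<psi> \<Longrightarrow> g \<in> CC m \<Longrightarrow> h \<in> CC m \<Longrightarrow> k \<in> CC m \<Longrightarrow>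
   \<psi> g h * \<psi> (mulm m g h) k = \<psi> g (mulm m h k) * \<psi> h k"
  unfolding cocid_def by blast

lemma pm1_mult: "(x::int) \<in> {1,-1} \<Longrightarrow> y \<in> {1,-1} \<Longrightarrow> x * y \<in> {1,-1}" by auto

lemma cancel_sq: "(b::int) * b = 1 \<Longrightarrow> x * b = y \<Longrightarrow> x = y * b"
  by (metis mult.assoc mult_1_right)

lemma classify:
  assumes modd: "odd m"
    and vals: "\<And>g h. g \<in> CC m \<Longrightarrow> h \<in> CC m \<Longrightarrow> \<psi> g h \<in> {1,-1}"
    and coc: "cocid m \<psi>"
  shows "\<exists>\<Phi>. (\<forall>g\<in>CC m. \<Phi> g \<in> {1,-1}) \<and>
     ((\<forall>g\<in>CC m. \<forall>h\<in>CC m. \<psi> g h = dphi m \<Phi> g h) \<or>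
      (\<forall>g\<in>CC m. \<forall>h\<in>CC m. \<psi> g h = beta g h * dphi m \<Phi> g h))"
proof -
  have m0: "m > 0" using modd by (cases m) auto
  let ?Y = "{0..<int m}"
  have Y0: "(u, y) \<in> CC m" if "y \<in> ?Y" "u \<in> {0,1}" for u y using that by (auto simp: CC_def)
  define A :: "int \<times> int \<Rightarrow> int" where "A x = (\<Prod>y\<in>?Y. \<psi> x (0,y))" for x
  define P :: "int \<times> int \<Rightarrow> int \<Rightarrow> int" where "P g u = (\<Prod>y\<in>?Y. \<psi> g (u,y))" for g u
  have A_pm: "A x \<in> {1,-1}" if "x \<in> CC m" for x
    unfolding A_def by (rule prod_pm1) (use that vals Y0 in auto)
  have P_pm: "P g u \<in> {1,-1}" if "g \<in> CC m" "u \<in> {0,1}" for g u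
    unfolding P_def by (rule prod_pm1) (use that vals Y0 in auto)
  have step1: "\<psi> g h * A (mulm m g h) = P g (fst h) * A h" if g: "g \<in> CC m" and h: "h \<in> CC m" for g h
  proof -
    have fh: "fst h \<in> {0,1}" using h by (auto simp: CC_def)
    have mh: "mulm m h (0,y) = (fst h, (snd h + y) mod int m)" for y
      using fh by (auto simp: mulm_def)
    have eq: "\<psi> g h * \<psi> (mulm m g h) (0,y) = \<psi> g (fst h, (snd h + y) mod int m) * \<psi> h (0,y)"
      if "y \<in> ?Y" for y
      using cocidD[OF coc g h Y0[OF that, of 0]] mh by simp
    have "(\<Prod>y\<in>?Y. \<psi> g h * \<psi> (mulm m g h) (0,y)) = (\<Prod>y\<in>?Y. \<psi> g (fst h, (snd h + y) mod int m) * \<psi> h (0,y))"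
      using eq by (rule prod.cong[OF refl])
    moreover have "(\<Prod>y\<in>?Y. \<psi> g h * \<psi> (mulm m g h) (0,y)) = \<psi> g h ^ m * A (mulm m g h)"
      by (simp add: prod.distrib A_def)
    moreover have "(\<Prod>y\<in>?Y. \<psi> g (fst h, (snd h + y) mod int m) * \<psi> h (0,y)) = P g (fst h) * A h"
      using prod_shift[OF m0, of "\<lambda>y. \<psi> g (fst h, y)" "snd h"]
      by (simp add: prod.distrib A_def P_def)
    moreover have "\<psi> g h ^ m = \<psi> g h" using pm1_pow_odd vals g h modd by blast
    ultimately show ?thesis by simp
  qed
  define \<psi>1 :: "int \<times> int \<Rightarrow> int \<times> int \<Rightarrow> int" where "\<psi>1 g h = A g * P g (fst h)" for g h
  have \<psi>1_eq: "\<psi>1 g h = \<psi> g h * dphi m A g h" if g: "g \<in> CC m" and h: "h \<in> CC m" for g h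
  proof -
    have s: "A (mulm m g h) * A (mulm m g h) = 1" "A h * A h = 1"
      using A_pm mulm_CC m0 h pm1_sq by blast+
    have e: "\<psi> g h = P g (fst h) * A h * A (mulm m g h)" using cancel_sq[OF s(1) step1[OF g h]] .
    have "\<psi> g h * dphi m A g h = A g * P g (fst h) * (A h * A h) * (A (mulm m g h) * A (mulm m g h))"
      unfolding dphi_def e by (simp add: mult_ac)
    then show ?thesis unfolding \<psi>1_def using s by simp
  qed
  have A_cc: "cocid m (dphi m A)" using cocid_dphi[OF m0] A_pm by blast
  have coc1: "cocid m \<psi>1"
    by (rule cocid_cong[OF m0 _ cocid_mult[OF coc A_cc]]) (simp add: \<psi>1_eq)
  have \<psi>1_pm: "\<psi>1 g h \<in> {1,-1}" if "g \<in> CC m" "h \<in> CC m" for g h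
  proof -
    have "fst h \<in> {0,1}" using that by (auto simp: CC_def)
    then show ?thesis unfolding \<psi>1_def using pm1_mult[OF A_pm[OF that(1)] P_pm[OF that(1)]] by blast
  qed
  define A' :: "int \<times> int \<Rightarrow> int" where "A' x = (\<Prod>z\<in>?Y. \<psi>1 (0,z) x)" for x
  define Q :: "int \<times> int \<Rightarrow> int \<times> int \<Rightarrow> int" where "Q h k = (\<Prod>z\<in>?Y. \<psi>1 (fst h, z) k)" for h k
  have A'_pm: "A' x \<in> {1,-1}" if "x \<in> CC m" for x
    unfolding A'_def by (rule prod_pm1) (use that \<psi>1_pm Y0 in auto)
  have step2: "A' h * Q h k = A' (mulm m h k) * \<psi>1 h k" if h: "h \<in> CC m" and k: "k \<in> CC m" for h k
  proof -
    have fh: "fst h \<in> {0,1}" using h by (auto simp: CC_def)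
    have mh: "mulm m (0,z) h = (fst h, (snd h + z) mod int m)" for z
      using fh by (auto simp: mulm_def add.commute)
    have eq: "\<psi>1 (0,z) h * \<psi>1 (fst h, (snd h + z) mod int m) k = \<psi>1 (0,z) (mulm m h k) * \<psi>1 h k"
      if "z \<in> ?Y" for z
      using cocidD[OF coc1 Y0[OF that, of 0] h k] mh by simp
    have "(\<Prod>z\<in>?Y. \<psi>1 (0,z) h * \<psi>1 (fst h, (snd h + z) mod int m) k) = (\<Prod>z\<in>?Y. \<psi>1 (0,z) (mulm m h k) * \<psi>1 h k)"
      using eq by (rule prod.cong[OF refl])
    moreover have "(\<Prod>z\<in>?Y. \<psi>1 (0,z) h * \<psi>1 (fst h, (snd h + z) mod int m) k) = A' h * Q h k"
      using prod_shift[OF m0, of "\<lambda>z. \<psi>1 (fst h, z) k" "snd h"]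
      by (simp add: prod.distrib A'_def Q_def)
    moreover have "(\<Prod>z\<in>?Y. \<psi>1 (0,z) (mulm m h k) * \<psi>1 h k) = A' (mulm m h k) * \<psi>1 h k ^ m"
      by (simp add: prod.distrib A'_def)
    moreover have "\<psi>1 h k ^ m = \<psi>1 h k" using pm1_pow_odd \<psi>1_pm h k modd by blast
    ultimately show ?thesis by simp
  qed
  define \<psi>2 :: "int \<times> int \<Rightarrow> int \<times> int \<Rightarrow> int" where "\<psi>2 h k = \<psi>1 h k * dphi m A' h k" for h k
  have \<psi>2_eq: "\<psi>2 h k = A' k * Q h k" if h: "h \<in> CC m" and k: "k \<in> CC m" for h k
  proof -
    have s: "A' (mulm m h k) * A' (mulm m h k) = 1" "A' h * A' h = 1"
      using A'_pm mulm_CC m0 h pm1_sq by blast+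
    have "\<psi>1 h k * A' (mulm m h k) = A' h * Q h k" using step2[OF h k] by (simp add: mult.commute)
    then have e: "\<psi>1 h k = A' h * Q h k * A' (mulm m h k)" using cancel_sq[OF s(1)] by blast
    have "\<psi>1 h k * dphi m A' h k = A' k * Q h k * (A' h * A' h) * (A' (mulm m h k) * A' (mulm m h k))"
      unfolding dphi_def e by (simp add: mult_ac)
    then show ?thesis unfolding \<psi>2_def using s by simp
  qed
  have \<psi>2_dep: "\<psi>2 h k = \<psi>2 (fst h, 0) (fst k, 0)" if h: "h \<in> CC m" and k: "k \<in> CC m" for h k
  proof -
    have "(fst h, 0) \<in> CC m" "(fst k, 0) \<in> CC m" using h k m0 by (auto simp: CC_def)
    then show ?thesis using \<psi>2_eq h k by (simp add: A'_def Q_def \<psi>1_def)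
  qed
  have A'_cc: "cocid m (dphi m A')" using cocid_dphi[OF m0] A'_pm by blast
  have coc2: "cocid m \<psi>2" unfolding \<psi>2_def by (rule cocid_mult[OF coc1 A'_cc])
  have \<psi>2_pm: "\<psi>2 g h \<in> {1,-1}" if "g \<in> CC m" "h \<in> CC m" for g h
    unfolding \<psi>2_def dphi_def by (intro pm1_mult A'_pm \<psi>1_pm mulm_CC[OF m0] that)
  have z0: "(0,0) \<in> CC m" "(1,0) \<in> CC m" using m0 by (auto simp: CC_def)
  have left_right: "\<psi>2 g (0,0) = \<psi>2 (0,0) k" if g: "g \<in> CC m" and k: "k \<in> CC m" for g k
  proof -
    have "\<psi>2 g (0,0) * \<psi>2 g k = \<psi>2 g k * \<psi>2 (0,0) k"
      using cocidD[OF coc2 g z0(1) k] mulm_zero_left[OF k] mulm_zero_right[OF g] by simp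
    moreover have "\<psi>2 g k \<noteq> 0" using \<psi>2_pm[OF g k] by auto
    ultimately show ?thesis by simp
  qed
  define c where "c = \<psi>2 (0,0) (0,0)"
  have c_pm: "c \<in> {1,-1}" using \<psi>2_pm z0 c_def by auto
  define \<Phi> :: "int \<times> int \<Rightarrow> int" where "\<Phi> x = c * A x * A' x" for x
  have \<Phi>_pm: "\<forall>g\<in>CC m. \<Phi> g \<in> {1,-1}" unfolding \<Phi>_def by (intro ballI pm1_mult A_pm A'_pm c_pm)
  have \<psi>_decomp: "\<psi> g h = \<psi>2 g h * c * dphi m \<Phi> g h" if g: "g \<in> CC m" and h: "h \<in> CC m" for g h
  proof -
    have "dphi m A g h \<in> {1,-1}" "dphi m A' g h \<in> {1,-1}"
      unfolding dphi_def by (intro pm1_mult A_pm A'_pm mulm_CC[OF m0] g h)+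
    then have "dphi m A g h * dphi m A g h = 1" "dphi m A' g h * dphi m A' g h = 1" "c * c = 1"
      using c_pm pm1_sq by blast+
    note s = this
    have "dphi m \<Phi> g h = c * c * c * dphi m A g h * dphi m A' g h"
      unfolding dphi_def \<Phi>_def by (simp add: algebra_simps)
    then have "\<psi>2 g h * c * dphi m \<Phi> g h = \<psi> g h * (dphi m A g h * dphi m A g h) *
         (dphi m A' g h * dphi m A' g h) * (c * c) * (c * c)"
      unfolding \<psi>2_def \<psi>1_eq[OF g h] by (simp add: mult_ac)
    then show ?thesis using s by simp
  qed
  have fst01: "fst g = 0 \<or> fst g = 1" if "g \<in> CC m" for g using that by (auto simp: CC_def)
  have c10: "\<psi>2 (1,0) (0,0) = c" "\<psi>2 (0,0) (1,0) = c"
    using left_right[OF z0(2) z0(1)] left_right[OF z0(1) z0(2)] c_def by auto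
  have cc: "c * c = 1" using c_pm pm1_sq by blast
  show ?thesis
  proof (cases "\<psi>2 (1,0) (1,0) = c")
    case True
    have all: "\<psi>2 g h = c" if "g \<in> CC m" "h \<in> CC m" for g h
    proof -
      have "\<psi>2 (fst g, 0) (fst h, 0) = c"
        using fst01[OF that(1)] fst01[OF that(2)] True c10 c_def by (elim disjE) simp_all
      then show ?thesis using \<psi>2_dep[OF that] by simp
    qed
    have "\<psi> g h = dphi m \<Phi> g h" if "g \<in> CC m" "h \<in> CC m" for g h
    proof -
      have "\<psi> g h = c * c * dphi m \<Phi> g h" using \<psi>_decomp[OF that] all[OF that] by simp
      then show ?thesis using cc by simp
    qed
    then show ?thesis using \<Phi>_pm by blast
  next
    case False
    then have d: "\<psi>2 (1,0) (1,0) = - c" using \<psi>2_pm[OF z0(2) z0(2)] c_pm by auto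
    have all: "\<psi>2 g h = c * beta g h" if "g \<in> CC m" "h \<in> CC m" for g h
    proof -
      have "\<psi>2 (fst g, 0) (fst h, 0) = c * beta g h"
        using fst01[OF that(1)] fst01[OF that(2)] d c10 c_def by (elim disjE) (simp_all add: beta_def)
      then show ?thesis using \<psi>2_dep[OF that] by simp
    qed
    have "\<psi> g h = beta g h * dphi m \<Phi> g h" if "g \<in> CC m" "h \<in> CC m" for g h
    proof -
      have "\<psi> g h = (c * c) * beta g h * dphi m \<Phi> g h" using \<psi>_decomp[OF that] all[OF that]
        by (simp add: algebra_simps)
      then show ?thesis using cc by simp
    qed
    then show ?thesis using \<Phi>_pm by blast
  qed
qed

definition phiab :: "(nat \<Rightarrow> int) \<Rightarrow> (nat \<Rightarrow> int) \<Rightarrow> int \<times> int \<Rightarrow> int" where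
  "phiab a b g = (if fst g = 0 then a (nat (snd g)) else b (nat (snd g)))"

definition Sab :: "nat \<Rightarrow> (nat \<Rightarrow> int) \<Rightarrow> (nat \<Rightarrow> int) \<Rightarrow> nat \<Rightarrow> int" where
  "Sab m a b w = (\<Sum>k<m. a k * a ((k + w) mod m) + b k * b ((k + w) mod m))"

definition Dab :: "nat \<Rightarrow> (nat \<Rightarrow> int) \<Rightarrow> (nat \<Rightarrow> int) \<Rightarrow> nat \<Rightarrow> int" where
  "Dab m a b w = (\<Sum>k<m. b k * a ((k + w) mod m) - a k * b ((k + w) mod m))"

lemma sum_Y: "(\<Sum>y\<in>{0..<int m}. F y) = (\<Sum>k<m. F (int k))"
proof -
  have "{0..<int m} = int ` {..<m}"
    by (simp add: image_int_atLeastLessThan lessThan_atLeast0)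
  then show ?thesis by (simp add: sum.reindex)
qed

lemma sum_CC: "(\<Sum>h\<in>CC m. F h) = (\<Sum>k<m. F (0, int k)) + (\<Sum>k<m. F (1, int k))"
proof -
  have e: "{0..<2::int} = {0,1}" by auto
  have "(\<Sum>h\<in>CC m. F h) = (\<Sum>v\<in>{0..<2::int}. \<Sum>y\<in>{0..<int m}. F (v,y))"
    unfolding CC_def by (simp add: sum.cartesian_product)
  also have "\<dots> = (\<Sum>y\<in>{0..<int m}. F (0,y)) + (\<Sum>y\<in>{0..<int m}. F (1,y))"
    unfolding e by simp
  finally show ?thesis by (simp add: sum_Y)
qed

lemma nat_mod_add: "nat ((int x + int k) mod int m) = (x + k) mod m"
  by (metis nat_int of_nat_add zmod_int)

lemma mulm_int: "mulm m (u, int x) (v, int k) = ((u + v) mod 2, int ((x + k) mod m))"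
  by (simp add: mulm_def zmod_int)

lemma row0: "(\<Sum>h\<in>CC m. beta (0, int x) h * dphi m (phiab a b) (0, int x) h) = a x * Sab m a b x"
  unfolding sum_CC Sab_def
  by (simp add: mulm_int beta_def dphi_def phiab_def sum_distrib_left sum.distrib[symmetric]
      algebra_simps add.commute[of x])

lemma row1: "(\<Sum>h\<in>CC m. beta (1, int x) h * dphi m (phiab a b) (1, int x) h) = - (b x * Dab m a b x)"
  unfolding sum_CC Dab_def
  by (simp add: mulm_int beta_def dphi_def phiab_def sum_distrib_left sum.distrib[symmetric]
      sum_subtractf[symmetric] sum_negf[symmetric] algebra_simps add.commute[of x])

lemma CC_minus: "CC m - {(0,0)} = ((\<lambda>x. (0, int x)) ` {1..<m}) \<union> ((\<lambda>x. (1, int x)) ` {..<m})"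
proof
  show "CC m - {(0,0)} \<subseteq> ((\<lambda>x. (0, int x)) ` {1..<m}) \<union> ((\<lambda>x. (1, int x)) ` {..<m})"
  proof
    fix g assume g: "g \<in> CC m - {(0,0)}"
    obtain u y where uy: "g = (u,y)" by (cases g)
    have u: "u = 0 \<or> u = 1" and y: "0 \<le> y" "y < int m" using g uy by (auto simp: CC_def)
    have yy: "y = int (nat y)" using y by simp
    show "g \<in> ((\<lambda>x. (0, int x)) ` {1..<m}) \<union> ((\<lambda>x. (1, int x)) ` {..<m})"
    proof (cases "u = 0")
      case True
      then have "y \<noteq> 0" using g uy by auto
      then have "nat y \<in> {1..<m}" using y by auto
      then show ?thesis using uy True yy by blast
    next
      case False
      then have "u = 1" using u by auto
      moreover have "nat y \<in> {..<m}" using y by auto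
      ultimately show ?thesis using uy yy by blast
    qed
  qed
  show "((\<lambda>x. (0, int x)) ` {1..<m}) \<union> ((\<lambda>x. (1, int x)) ` {..<m}) \<subseteq> CC m - {(0,0)}"
    by (auto simp: CC_def)
qed

lemma RE_formula:
  assumes "\<And>k. k < m \<Longrightarrow> a k \<in> {1,-1}" "\<And>k. k < m \<Longrightarrow> b k \<in> {1,-1}"
  shows "(\<Sum>g\<in>CC m - {(0,0)}. \<bar>\<Sum>h\<in>CC m. beta g h * dphi m (phiab a b) g h\<bar>)
    = (\<Sum>x\<in>{1..<m}. \<bar>Sab m a b x\<bar>) + (\<Sum>x<m. \<bar>Dab m a b x\<bar>)"
proof -
  let ?F = "\<lambda>g. \<bar>\<Sum>h\<in>CC m. beta g h * dphi m (phiab a b) g h\<bar>"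
  have disj: "((\<lambda>x. (0::int, int x)) ` {1..<m}) \<inter> ((\<lambda>x. (1, int x)) ` {..<m}) = {}" by auto
  have "(\<Sum>g\<in>CC m - {(0,0)}. ?F g) = (\<Sum>g\<in>(\<lambda>x. (0, int x)) ` {1..<m}. ?F g) + (\<Sum>g\<in>(\<lambda>x. (1, int x)) ` {..<m}. ?F g)"
    unfolding CC_minus by (rule sum.union_disjoint) (use disj in auto)
  also have "\<dots> = (\<Sum>x\<in>{1..<m}. ?F (0, int x)) + (\<Sum>x<m. ?F (1, int x))"
    by (simp add: sum.reindex inj_on_def)
  also have "(\<Sum>x\<in>{1..<m}. ?F (0, int x)) = (\<Sum>x\<in>{1..<m}. \<bar>Sab m a b x\<bar>)"
  proof (rule sum.cong[OF refl])
    fix x assume "x \<in> {1..<m}"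
    then have "\<bar>a x\<bar> = 1" using assms(1) by fastforce
    then show "?F (0, int x) = \<bar>Sab m a b x\<bar>" unfolding row0 by (simp add: abs_mult)
  qed
  also have "(\<Sum>x<m. ?F (1, int x)) = (\<Sum>x<m. \<bar>Dab m a b x\<bar>)"
  proof (rule sum.cong[OF refl])
    fix x assume "x \<in> {..<m}"
    then have "\<bar>b x\<bar> = 1" using assms(2) by fastforce
    then show "?F (1, int x) = \<bar>Dab m a b x\<bar>" unfolding row1 by (simp add: abs_mult)
  qed
  finally show ?thesis .
qed

lemma sum_pm1_mod4:
  assumes "finite S" "\<And>x. x \<in> S \<Longrightarrow> s x \<in> {1,-1::int}"
  shows "\<exists>q. sum s S = int (card S) + 1 - prod s S + 4 * q"
  using assms
proof (induction S rule: finite_induct)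
  case empty
  then show ?case by simp
next
  case (insert x F)
  then obtain q where q: "sum s F = int (card F) + 1 - prod s F + 4 * q" by auto
  have P: "prod s F \<in> {1,-1}" using prod_pm1 insert by blast
  have sx: "s x \<in> {1,-1}" using insert by auto
  have eq: "sum s (insert x F) = s x + sum s F" "prod s (insert x F) = s x * prod s F"
    "card (insert x F) = Suc (card F)" using insert by auto
  show ?case
  proof (cases "s x = 1")
    case True
    then show ?thesis unfolding eq using q by (intro exI[of _ q]) simp
  next
    case False
    then have "s x = -1" using sx by auto
    then show ?thesis unfolding eq using q P
      by (auto intro: exI[of _ "q - 1"] exI[of _ q])
  qed
qed

lemma bij_shift_nat: "(m::nat) > 0 \<Longrightarrow> bij_betw (\<lambda>k. (k + w) mod m) {..<m} {..<m}"
proof -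
  assume m: "m > 0"
  have inj: "inj_on (\<lambda>k. (k + w) mod m) {..<m}"
  proof (rule inj_onI)
    fix x y :: nat assume "x \<in> {..<m}" "y \<in> {..<m}" "(x + w) mod m = (y + w) mod m"
    then have "(int x + int w) mod int m = (int y + int w) mod int m"
      by (metis of_nat_add zmod_int)
    then have "((int x + int w) mod int m - int w) mod int m = ((int y + int w) mod int m - int w) mod int m"
      by simp
    then have "int x mod int m = int y mod int m" by (simp add: mod_diff_left_eq)
    then show "x = y" using \<open>x \<in> {..<m}\<close> \<open>y \<in> {..<m}\<close> by simp
  qed
  have "(\<lambda>k. (k + w) mod m) ` {..<m} \<subseteq> {..<m}" using m by auto
  then have "(\<lambda>k. (k + w) mod m) ` {..<m} = {..<m}" using inj by (simp add: endo_inj_surj)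
  then show ?thesis using inj by (simp add: bij_betw_def)
qed

lemma autocorr_mod4:
  assumes "m > 0" "\<And>k. k < m \<Longrightarrow> a k \<in> {1,-1::int}"
  shows "\<exists>q. (\<Sum>k<m. a k * a ((k + w) mod m)) = int m + 4 * q"
proof -
  have pm: "a k * a ((k + w) mod m) \<in> {1,-1}" if "k \<in> {..<m}" for k
    using assms that by (intro pm1_mult) auto
  have "(\<Prod>k<m. a ((k + w) mod m)) = (\<Prod>k<m. a k)"
    using prod.reindex_bij_betw[OF bij_shift_nat[OF assms(1), of w], of a] by simp
  then have "(\<Prod>k<m. a k * a ((k + w) mod m)) = (\<Prod>k<m. a k) * (\<Prod>k<m. a k)"
    by (simp add: prod.distrib)
  also have "\<dots> = 1" using pm1_sq prod_pm1[of "{..<m}" a] assms(2) by simp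
  finally have "(\<Prod>k<m. a k * a ((k + w) mod m)) = 1" .
  then show ?thesis using sum_pm1_mod4[of "{..<m}" "\<lambda>k. a k * a ((k + w) mod m)"] pm by simp
qed

lemma Sab_ge2:
  assumes "odd m" "\<And>k. k < m \<Longrightarrow> a k \<in> {1,-1}" "\<And>k. k < m \<Longrightarrow> b k \<in> {1,-1}"
  shows "\<bar>Sab m a b w\<bar> \<ge> 2"
proof -
  have m: "m > 0" using assms(1) by (cases m) auto
  obtain q1 where q1: "(\<Sum>k<m. a k * a ((k + w) mod m)) = int m + 4 * q1"
    using autocorr_mod4[of m a w, OF m assms(2)] by blast
  obtain q2 where q2: "(\<Sum>k<m. b k * b ((k + w) mod m)) = int m + 4 * q2"
    using autocorr_mod4[of m b w, OF m assms(3)] by blast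
  obtain j where j: "m = 2 * j + 1" using assms(1) oddE by blast
  have "Sab m a b w = 2 * int m + 4 * (q1 + q2)"
    unfolding Sab_def sum.distrib q1 q2 by simp
  then have "Sab m a b w = 2 + 4 * (int j + q1 + q2)" unfolding j by simp
  then show ?thesis by presburger
qed

definition fab :: "(nat \<Rightarrow> int) \<Rightarrow> (nat \<Rightarrow> int) \<Rightarrow> nat \<Rightarrow> complex" where
  "fab a b k = (of_int (a k + b k) + \<i> * of_int (b k - a k)) / 2"

lemma fab_term: "fab a b k * cnj (fab a b j) =
   (of_int (a k * a j + b k * b j) + \<i> * of_int (b k * a j - a k * b j)) / 2"
  unfolding fab_def by (simp add: complex_eq_iff field_simps)

lemma autocorr_fab:
  assumes "\<And>k. k < m \<Longrightarrow> f k = fab a b k"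
  shows "autocorr m f w = (of_int (Sab m a b w) + \<i> * of_int (Dab m a b w)) / 2"
proof -
  have m0: "m > 0 \<Longrightarrow> (k + w) mod m < m" for k by simp
  have "autocorr m f w = (\<Sum>k<m. fab a b k * cnj (fab a b ((k + w) mod m)))"
    unfolding autocorr_def
  proof (rule sum.cong[OF refl])
    fix k assume k: "k \<in> {..<m}"
    then have "m > 0" by auto
    then show "f k * cnj (f ((k + w) mod m)) = fab a b k * cnj (fab a b ((k + w) mod m))"
      using assms k by simp
  qed
  also have "\<dots> = (\<Sum>k<m. (of_int (a k * a ((k + w) mod m) + b k * b ((k + w) mod m))
       + \<i> * of_int (b k * a ((k + w) mod m) - a k * b ((k + w) mod m))) / 2)"
    by (simp add: fab_term)
  also have "\<dots> = (of_int (Sab m a b w) + \<i> * of_int (Dab m a b w)) / 2"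
    unfolding Sab_def Dab_def
    by (simp add: sum_divide_distrib[symmetric] sum.distrib sum_distrib_left)
  finally show ?thesis .
qed

lemma cmod_half: "cmod ((of_int S + \<i> * of_int D) / 2) = 1 \<longleftrightarrow> S^2 + D^2 = (4::int)"
proof -
  let ?z = "(of_int S + \<i> * of_int D) / 2 :: complex"
  have "cmod ?z = 1 \<longleftrightarrow> cmod ?z ^ 2 = 1"
    using norm_ge_zero[of ?z] power2_eq_1_iff[of "cmod ?z"] by linarith
  also have "cmod ?z ^ 2 = (real_of_int S / 2)^2 + (real_of_int D / 2)^2"
    unfolding cmod_power2 by simp
  also have "\<dots> = 1 \<longleftrightarrow> real_of_int (S^2 + D^2) = 4"
    by (simp add: power_divide field_simps)
  also have "\<dots> \<longleftrightarrow> S^2 + D^2 = 4" by linarith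
  finally show ?thesis .
qed

lemma fab_vals: "a k \<in> {1,-1} \<Longrightarrow> b k \<in> {1,-1} \<Longrightarrow> fab a b k \<in> {1, -1, \<i>, -\<i>}"
  unfolding fab_def by (auto simp: complex_eq_iff)

lemma not_cob:
  assumes m0: "m > 0" and that: "\<forall>g\<in>CC m. \<Phi> g \<in> {1,-1}"
  shows "\<not> (\<exists>\<theta>. (\<forall>g\<in>CC m. \<theta> g \<in> {1,-1}) \<and>
            (\<forall>g\<in>CC m. \<forall>h\<in>CC m. beta g h * dphi m \<Phi> g h = dphi m \<theta> g h))"
proof
  assume "\<exists>\<theta>. (\<forall>g\<in>CC m. \<theta> g \<in> {1,-1}) \<and>
            (\<forall>g\<in>CC m. \<forall>h\<in>CC m. beta g h * dphi m \<Phi> g h = dphi m \<theta> g h)"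
  then obtain \<theta> where th: "\<forall>g\<in>CC m. \<theta> g \<in> {1,-1}"
    and eq: "\<forall>g\<in>CC m. \<forall>h\<in>CC m. beta g h * dphi m \<Phi> g h = dphi m \<theta> g h" by blast
  have z: "(0,0) \<in> CC m" "(1,0) \<in> CC m" using m0 by (auto simp: CC_def)
  have mm: "mulm m (0,0) (0,0) = (0,0)" "mulm m (1,0) (1,0) = (0,0)" by (auto simp: mulm_def)
  have "beta (0,0) (0,0) * dphi m \<Phi> (0,0) (0,0) = dphi m \<theta> (0,0) (0,0)" using eq z by blast
  then have e1: "\<Phi> (0,0) * \<Phi> (0,0) * \<Phi> (0,0) = \<theta> (0,0) * \<theta> (0,0) * \<theta> (0,0)"
    using mm by (simp add: beta_def dphi_def)
  have "beta (1,0) (1,0) * dphi m \<Phi> (1,0) (1,0) = dphi m \<theta> (1,0) (1,0)" using eq z by blast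
  then have e2: "- (\<Phi> (1,0) * \<Phi> (1,0) * \<Phi> (0,0)) = \<theta> (1,0) * \<theta> (1,0) * \<theta> (0,0)"
    using mm by (simp add: beta_def dphi_def)
  have "\<Phi> (0,0) \<in> {1,-1}" "\<Phi> (1,0) \<in> {1,-1}" "\<theta> (0,0) \<in> {1,-1}" "\<theta> (1,0) \<in> {1,-1}"
    using that th z by auto
  then show False using e1 e2 by auto
qed

lemma phiab_pm:
  assumes "\<And>k. k < m \<Longrightarrow> a k \<in> {1,-1}" "\<And>k. k < m \<Longrightarrow> b k \<in> {1,-1}" "g \<in> CC m"
  shows "phiab a b g \<in> {1,-1}"
proof -
  have "nat (snd g) < m" using assms(3) by (auto simp: CC_def)
  then show ?thesis using assms unfolding phiab_def by auto
qed

lemma scale_aux: "(c::int) * c = 1 \<Longrightarrow> c * x * (c * y) = x * y"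
proof -
  assume c: "c * c = 1"
  have "c * x * (c * y) = (c * c) * (x * y)" by (simp add: ac_simps)
  then show ?thesis using c by simp
qed

lemma Sab_scale: "c * c = 1 \<Longrightarrow> Sab m (\<lambda>k. c * a k) (\<lambda>k. c * b k) w = Sab m a b w"
  unfolding Sab_def by (simp only: scale_aux)

lemma Dab_scale: "c * c = 1 \<Longrightarrow> Dab m (\<lambda>k. c * a k) (\<lambda>k. c * b k) w = Dab m a b w"
  unfolding Dab_def by (simp only: scale_aux)

lemma Dab_0: "Dab m a b 0 = 0"
  unfolding Dab_def by (simp add: algebra_simps)

lemma S_D_aux: "\<bar>S\<bar> \<ge> 2 \<Longrightarrow> S^2 + D^2 = (4::int) \<Longrightarrow> \<bar>S\<bar> = 2 \<and> D = 0"
proof -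
  assume a: "\<bar>S\<bar> \<ge> 2" "S^2 + D^2 = 4"
  have "S^2 = \<bar>S\<bar> * \<bar>S\<bar>" by (simp add: power2_eq_square abs_mult_self_eq)
  moreover have "\<bar>S\<bar> * \<bar>S\<bar> \<ge> 2 * \<bar>S\<bar>" using a(1) by (intro mult_right_mono) auto
  moreover have "D^2 \<ge> 0" by simp
  ultimately have "\<bar>S\<bar> \<le> 2" "D^2 = 0" using a by linarith+
  then show ?thesis using a(1) by simp
qed

lemma forward:
  assumes "odd m" "m > 1" "OQS m f"
  shows "\<exists>\<psi>. normalized_cocycle (GG m) \<psi> \<and> quasi_orthogonal (GG m) \<psi> \<and> \<not> coboundary (GG m) \<psi>"
proof -
  have m0: "m > 0" using assms by simp
  have fv: "\<And>k. k < m \<Longrightarrow> f k \<in> {1, -1, \<i>, -\<i>}"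
    and fc: "\<And>w. w \<in> {1..m-1} \<Longrightarrow> cmod (autocorr m f w) = 1"
    using assms(3) unfolding OQS_def by auto
  define a0 :: "nat \<Rightarrow> int" where "a0 k = (if f k = 1 \<or> f k = -\<i> then 1 else -1)" for k
  define b0 :: "nat \<Rightarrow> int" where "b0 k = (if f k = 1 \<or> f k = \<i> then 1 else -1)" for k
  have a0pm: "a0 k \<in> {1,-1}" and b0pm: "b0 k \<in> {1,-1}" for k unfolding a0_def b0_def by auto
  have ffab: "f k = fab a0 b0 k" if "k < m" for k
    using fv[OF that] unfolding a0_def b0_def fab_def by (auto simp: complex_eq_iff)
  have SD0: "\<bar>Sab m a0 b0 w\<bar> = 2 \<and> Dab m a0 b0 w = 0" if "w \<in> {1..m-1}" for w
  proof -
    have "(Sab m a0 b0 w)^2 + (Dab m a0 b0 w)^2 = 4"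
      using fc[OF that] autocorr_fab[of m f a0 b0 w] ffab cmod_half by simp
    moreover have "\<bar>Sab m a0 b0 w\<bar> \<ge> 2" using Sab_ge2[OF assms(1)] a0pm b0pm by blast
    ultimately show ?thesis using S_D_aux by blast
  qed
  define c where "c = a0 0"
  have cc: "c * c = 1" using a0pm[of 0] unfolding c_def by auto
  define a :: "nat \<Rightarrow> int" where "a k = c * a0 k" for k
  define b :: "nat \<Rightarrow> int" where "b k = c * b0 k" for k
  have apm: "a k \<in> {1,-1}" and bpm: "b k \<in> {1,-1}" for k
    unfolding a_def b_def using a0pm b0pm cc pm1_mult[of c] c_def by auto
  have a00: "a 0 = 1" unfolding a_def c_def using cc c_def by simp
  have SD: "\<bar>Sab m a b w\<bar> = 2 \<and> Dab m a b w = 0" if "w \<in> {1..m-1}" for w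
    using SD0[OF that] Sab_scale[OF cc] Dab_scale[OF cc] unfolding a_def b_def by simp
  define \<psi> where "\<psi> g h = beta g h * dphi m (phiab a b) g h" for g h
  have ppm: "\<And>g. g \<in> CC m \<Longrightarrow> phiab a b g \<in> {1,-1}" using phiab_pm apm bpm by blast
  have coc: "cocid m \<psi>" unfolding \<psi>_def
    by (rule cocid_mult[OF cocid_beta cocid_dphi[OF m0 ppm]])
  have vals: "\<psi> g h \<in> {1,-1}" if "g \<in> CC m" "h \<in> CC m" for g h
    unfolding \<psi>_def beta_def dphi_def
    by (intro pm1_mult ppm that mulm_CC[OF m0]) auto
  have nc: "normalized_cocycle (GG m) \<psi>"
    unfolding normalized_cocycle_def cocycle_iff[OF m0] oneGG
    using vals coc a00 unfolding cocid_def
    by (simp add: \<psi>_def beta_def dphi_def phiab_def mulm_def)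
  have ncob: "\<not> coboundary (GG m) \<psi>"
    unfolding coboundary_iff[OF m0] \<psi>_def
    using not_cob[OF m0, of "phiab a b"] ppm by (metis (no_types, lifting))
  obtain t where t: "m = 2 * t + 1" using assms(1) oddE by blast
  have RE: "row_excess (GG m) \<psi> = (\<Sum>x\<in>{1..<m}. \<bar>Sab m a b x\<bar>) + (\<Sum>x<m. \<bar>Dab m a b x\<bar>)"
    unfolding row_excess_eq[OF m0] \<psi>_def using RE_formula[of m a b] apm bpm by blast
  have "(\<Sum>x\<in>{1..<m}. \<bar>Sab m a b x\<bar>) = (\<Sum>x\<in>{1..<m}. 2)"
    by (rule sum.cong[OF refl]) (use SD in auto)
  moreover have "(\<Sum>x<m. \<bar>Dab m a b x\<bar>) = 0"
  proof (rule sum.neutral, rule ballI)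
    fix x assume "x \<in> {..<m}"
    then show "\<bar>Dab m a b x\<bar> = 0" using SD[of x] Dab_0[of m a b] by (cases "x = 0") auto
  qed
  ultimately have "row_excess (GG m) \<psi> = 2 * int (m - 1)" unfolding RE by simp
  then have "row_excess (GG m) \<psi> = 4 * int t" unfolding t by simp
  moreover have "card (carrier (GG m)) = 4 * t + 2" using carrGG[OF m0] card_CC t by simp
  ultimately have "quasi_orthogonal (GG m) \<psi>"
    unfolding quasi_orthogonal_def using nc ncob by blast
  then show ?thesis using nc ncob by blast
qed

lemma backward:
  assumes "odd m" "m > 1" "normalized_cocycle (GG m) \<psi>" "quasi_orthogonal (GG m) \<psi>"
    "\<not> coboundary (GG m) \<psi>"
  shows "\<exists>f. OQS m f"
proof -
  have m0: "m > 0" using assms by simp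
  have vals: "\<And>g h. g \<in> CC m \<Longrightarrow> h \<in> CC m \<Longrightarrow> \<psi> g h \<in> {1,-1}" and coc: "cocid m \<psi>"
    using assms(3) unfolding normalized_cocycle_def cocycle_iff[OF m0] cocid_def by auto
  obtain \<Phi> where \<Phi>pm: "\<forall>g\<in>CC m. \<Phi> g \<in> {1,-1}" and
    disj: "(\<forall>g\<in>CC m. \<forall>h\<in>CC m. \<psi> g h = dphi m \<Phi> g h) \<or>
      (\<forall>g\<in>CC m. \<forall>h\<in>CC m. \<psi> g h = beta g h * dphi m \<Phi> g h)"
    using classify[OF assms(1) vals coc] by blast
  have \<psi>eq: "\<forall>g\<in>CC m. \<forall>h\<in>CC m. \<psi> g h = beta g h * dphi m \<Phi> g h"
    using disj assms(5) \<Phi>pm unfolding coboundary_iff[OF m0] by blast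
  define a :: "nat \<Rightarrow> int" where "a k = \<Phi> (0, int k)" for k
  define b :: "nat \<Rightarrow> int" where "b k = \<Phi> (1, int k)" for k
  have apm: "a k \<in> {1,-1}" if "k < m" for k unfolding a_def using \<Phi>pm that by (auto simp: CC_def)
  have bpm: "b k \<in> {1,-1}" if "k < m" for k unfolding b_def using \<Phi>pm that by (auto simp: CC_def)
  have \<Phi>ab: "\<Phi> g = phiab a b g" if "g \<in> CC m" for g
  proof -
    obtain u y where g: "g = (u,y)" by (cases g)
    have "u = 0 \<or> u = 1" "y = int (nat y)" using that g by (auto simp: CC_def)
    then show ?thesis unfolding g phiab_def a_def b_def by auto
  qed
  have \<psi>ab: "\<psi> g h = beta g h * dphi m (phiab a b) g h" if "g \<in> CC m" "h \<in> CC m" for g h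
    using \<psi>eq that \<Phi>ab mulm_CC[OF m0] unfolding dphi_def by simp
  have RE: "row_excess (GG m) \<psi> = (\<Sum>x\<in>{1..<m}. \<bar>Sab m a b x\<bar>) + (\<Sum>x<m. \<bar>Dab m a b x\<bar>)"
  proof -
    have "row_excess (GG m) \<psi> = (\<Sum>g\<in>CC m - {(0,0)}. \<bar>\<Sum>h\<in>CC m. beta g h * dphi m (phiab a b) g h\<bar>)"
      unfolding row_excess_eq[OF m0] by (intro sum.cong refl arg_cong[where f=abs]) (simp add: \<psi>ab)
    then show ?thesis using RE_formula[of m a b] apm bpm by simp
  qed
  obtain t where t: "card (carrier (GG m)) = 4 * t + 2" and re: "row_excess (GG m) \<psi> = 4 * int t"
    using assms(4) assms(5) unfolding quasi_orthogonal_def by blast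
  have "2 * m = 4 * t + 2" using t carrGG[OF m0] card_CC by simp
  then have mt: "4 * int t = (\<Sum>x\<in>{1..<m}. 2)" by simp
  have Sge: "\<bar>Sab m a b x\<bar> \<ge> 2" for x using Sab_ge2[OF assms(1)] apm bpm by blast
  have "(\<Sum>x\<in>{1..<m}. \<bar>Sab m a b x\<bar> - 2) + (\<Sum>x<m. \<bar>Dab m a b x\<bar>) = 0"
    using RE re mt by (simp add: sum_subtractf)
  moreover have "(\<Sum>x\<in>{1..<m}. \<bar>Sab m a b x\<bar> - 2) \<ge> 0" using Sge by (intro sum_nonneg) auto
  moreover have "(\<Sum>x<m. \<bar>Dab m a b x\<bar>) \<ge> 0" by (intro sum_nonneg) auto
  ultimately have z1: "(\<Sum>x\<in>{1..<m}. \<bar>Sab m a b x\<bar> - 2) = 0" and z2: "(\<Sum>x<m. \<bar>Dab m a b x\<bar>) = 0"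
    by linarith+
  have S2: "\<bar>Sab m a b x\<bar> = 2" if "x \<in> {1..<m}" for x
    using z1 sum_nonneg_eq_0_iff[of "{1..<m}" "\<lambda>x. \<bar>Sab m a b x\<bar> - 2"] Sge that by auto
  have D0: "Dab m a b x = 0" if "x < m" for x
    using z2 sum_nonneg_eq_0_iff[of "{..<m}" "\<lambda>x. \<bar>Dab m a b x\<bar>"] that by auto
  have "OQS m (fab a b)"
    unfolding OQS_def
  proof (intro conjI allI impI ballI)
    show "odd m" by (rule assms(1))
    fix k assume "k < m" then show "fab a b k \<in> {1, -1, \<i>, -\<i>}" using fab_vals apm bpm by blast
  next
    fix w assume w: "w \<in> {1..m-1}"
    then have w': "w \<in> {1..<m}" "w < m" using m0 by auto
    have "(Sab m a b w)^2 = 4"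
    proof -
      have "Sab m a b w = 2 \<or> Sab m a b w = -2" using S2[OF w'(1)] by linarith
      then show ?thesis by auto
    qed
    then have sd: "(Sab m a b w)^2 + (Dab m a b w)^2 = 4" using D0[OF w'(2)] by simp
    have e: "autocorr m (fab a b) w = (of_int (Sab m a b w) + \<i> * of_int (Dab m a b w)) / 2"
      by (rule autocorr_fab) simp
    show "cmod (autocorr m (fab a b) w) = 1"
      unfolding e cmod_half by (rule sd)
  qed
  then show ?thesis by blast
qed

theorem corollary4:
  fixes m :: nat
  assumes "odd m" and "m > 1"
  shows "(\<exists>f. OQS m f) \<longleftrightarrow>
    (\<exists>\<psi>. normalized_cocycle (integer_mod_group 2 \<times>\<times> integer_mod_group m) \<psi> \<and>
         quasi_orthogonal (integer_mod_group 2 \<times>\<times> integer_mod_group m) \<psi> \<and>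
         \<not> coboundary (integer_mod_group 2 \<times>\<times> integer_mod_group m) \<psi>)"
  using forward[OF assms] backward[OF assms] by blast

end
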